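(* Let $g_1(z),\dots,g_m(z)$ be analytic functions near $\lambda\in\mathbb C$, let $w(z)=|Wr(g_1,\dots,g_m)|$ and let $Q(z,\partial_z)$ be the differential operator $Qu=|Wr(g_1,\dots,g_m,u)|$, written as $$Q=w(z)\partial_z^m-w'(z)\partial_z^{m-1}+v(z)\partial_z^{m-2}+(\text{terms of order}\le m-3).$$ Suppose $w(\lambda)=0$ and $w'(\lambda)\ne0$. Then there exists a unique distribution of the form $c=\delta_\lambda\circ(\partial_z+\gamma)$, $\gamma\in\mathbb C$, such that $c\circ Q=0$ (i.e. $c(Qu)=0$ for every analytic $u$), and $$\gamma=\frac{v(\lambda)-w''(\lambda)}{w'(\lambda)}.$$
   Context: $Wr(v_1,\dots,v_k)$ is the $k\times k$ matrix whose first row is $(v_1,\dots,v_k)$ and each subsequent row is the $z$-derivative of the previous one; $|\cdot|$ is the determinant. $\delta_\lambda$ denotes evaluation at $z=\lambda$, so $\delta_\lambda\circ(\partial_z+\gamma)$ maps $u$ to $u'(\lambda)+\gamma u(\lambda)$. *)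

theory Defs
  imports "HOL-Analysis.Analysis" "Jordan_Normal_Form.Determinant"
begin

definition Wr_mat :: "(complex \<Rightarrow> complex) list \<Rightarrow> complex \<Rightarrow> complex mat" where
  "Wr_mat vs z = mat (length vs) (length vs) (\<lambda>(i,j). (deriv ^^ i) (vs ! j) z)"

definition Wr :: "(complex \<Rightarrow> complex) list \<Rightarrow> complex \<Rightarrow> complex" where
  "Wr vs z = det (Wr_mat vs z)"

definition Qop :: "(complex \<Rightarrow> complex) list \<Rightarrow> (complex \<Rightarrow> complex) \<Rightarrow> complex \<Rightarrow> complex" where
  "Qop gs u = Wr (gs @ [u])"

text \<open>Coefficient of the derivative of order k (k \<le> m) of u in Q u: expanding the
  determinant along the last column (which is u, u', ..., u^(m)), it is the cofactor of
  the entry (k, m); it does not depend on u (the last column is deleted), so we use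
  the zero function as a dummy last entry.\<close>
definition Qcoeff :: "(complex \<Rightarrow> complex) list \<Rightarrow> nat \<Rightarrow> complex \<Rightarrow> complex" where
  "Qcoeff gs k z = cofactor (Wr_mat (gs @ [\<lambda>_. 0]) z) k (length gs)"

definition Qv :: "(complex \<Rightarrow> complex) list \<Rightarrow> complex \<Rightarrow> complex" where
  "Qv gs z = (if 2 \<le> length gs then Qcoeff gs (length gs - 2) z else 0)"

definition delta_shift :: "complex \<Rightarrow> complex \<Rightarrow> (complex \<Rightarrow> complex) \<Rightarrow> complex" where
  "delta_shift lam \<gamma> f = deriv f lam + \<gamma> * f lam"

end

theory Submission imports Defs "HOL-Complex_Analysis.Complex_Analysis" begin

lemma det_mat_fun:
  "det (mat n n (\<lambda>(i,j). f i j)) = (\<Sum>p\<in>{p. p permutes {0..<n}}. signof p * (\<Prod>i=0..<n. f i (p i)))"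
  by (subst det_def'[of _ n], simp, intro sum.cong refl arg_cong2[where f="(*)"] prod.cong,
      auto simp: permutes_in_image)

lemma prod_if_one:
  assumes "r \<in> A" "finite A"
  shows "(\<Prod>i\<in>A. if i = r then X i else Y i) = X r * (\<Prod>i\<in>A-{r}. Y i)"
  using assms by (subst prod.remove[of A r], auto intro!: prod.cong)

lemma det_mat_deriv:
  fixes a :: "nat \<Rightarrow> nat \<Rightarrow> complex \<Rightarrow> complex" and a' :: "nat \<Rightarrow> nat \<Rightarrow> complex"
  assumes d: "\<And>i j. i < n \<Longrightarrow> j < n \<Longrightarrow> (a i j has_field_derivative a' i j) (at z)"
  shows "((\<lambda>z. det (mat n n (\<lambda>(i,j). a i j z))) has_field_derivative
     (\<Sum>r\<in>{0..<n}. det (mat n n (\<lambda>(i,j). if i = r then a' i j else a i j z)))) (at z)"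
proof -
  let ?P = "{p. p permutes {0..<n}}"
  have "((\<lambda>z. \<Sum>p\<in>?P. signof p * (\<Prod>i=0..<n. a i (p i) z)) has_field_derivative
     (\<Sum>p\<in>?P. signof p * (\<Sum>x\<in>{0..<n}. a' x (p x) * (\<Prod>y\<in>{0..<n}-{x}. a y (p y) z)))) (at z)"
    by (intro DERIV_sum DERIV_cmult has_field_derivative_prod d) (auto simp: permutes_in_image)
  also have "(\<Sum>p\<in>?P. signof p * (\<Sum>x\<in>{0..<n}. a' x (p x) * (\<Prod>y\<in>{0..<n}-{x}. a y (p y) z)))
     = (\<Sum>r\<in>{0..<n}. \<Sum>p\<in>?P. signof p * (\<Prod>i=0..<n. if i = r then a' i (p i) else a i (p i) z))"
    by (subst sum.swap, simp add: sum_distrib_left prod_if_one)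
  also have "\<dots> = (\<Sum>r\<in>{0..<n}. det (mat n n (\<lambda>(i,j). if i = r then a' i j else a i j z)))"
    by (subst det_mat_fun) (intro sum.cong refl arg_cong2[where f="(*)"] prod.cong; auto)
  finally show ?thesis by (simp add: det_mat_fun)
qed

lemma Wr_fun: "Wr fs = (\<lambda>z. det (mat (length fs) (length fs) (\<lambda>(i,j). (deriv^^i) (fs!j) z)))"
  by (auto simp: Wr_def Wr_mat_def)

lemma Wr_has_deriv:
  assumes hol: "\<forall>f\<in>set fs. f holomorphic_on S" and S: "open S" "z \<in> S" and ne: "fs \<noteq> []"
  shows "(Wr fs has_field_derivative
     det (mat (length fs) (length fs) (\<lambda>(i,j). (deriv^^(if i = length fs - 1 then length fs else i)) (fs!j) z))) (at z)"
proof -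
  define n where "n = length fs"
  have n: "n > 0" using ne by (simp add: n_def)
  have d: "((deriv^^i) (fs!j) has_field_derivative (deriv^^Suc i) (fs!j) z) (at z)" if "j < n" for i j
  proof -
    have "(deriv^^i) (fs!j) holomorphic_on S"
      using hol that S by (intro holomorphic_higher_deriv) (auto simp: n_def)
    from holomorphic_derivI[OF this S] show ?thesis by simp
  qed
  let ?M = "\<lambda>r. mat n n (\<lambda>(i,j). if i = r then (deriv^^Suc i) (fs!j) z else (deriv^^i) (fs!j) z)"
  have D: "(Wr fs has_field_derivative (\<Sum>r\<in>{0..<n}. det (?M r))) (at z)"
    unfolding Wr_fun n_def[symmetric] by (rule det_mat_deriv) (use d in auto)
  have z: "det (?M r) = 0" if "r < n - 1" for r
  proof (rule det_identical_rows[of _ n r "Suc r"])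
    show "row (?M r) r = row (?M r) (Suc r)"
      using that by (intro eq_vecI) auto
  qed (use that in auto)
  have "(\<Sum>r\<in>{0..<n}. det (?M r)) = (\<Sum>r\<in>insert (n-1) {0..<n-1}. det (?M r))"
    using n by (intro sum.cong refl) auto
  also have "\<dots> = det (?M (n-1))" using z by (subst sum.insert) auto
  also have "?M (n-1) = mat n n (\<lambda>(i,j). (deriv^^(if i = n - 1 then n else i)) (fs!j) z)"
    using n by (intro eq_matI) auto
  finally have E: "(\<Sum>r\<in>{0..<n}. det (?M r)) = det (mat n n (\<lambda>(i,j). (deriv^^(if i = n - 1 then n else i)) (fs!j) z))" .
  show ?thesis using D unfolding E by (simp only: n_def)
qed

lemma det_mat_holo:
  assumes "\<And>i j. i < n \<Longrightarrow> j < n \<Longrightarrow> a i j holomorphic_on S" "open S"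
  shows "(\<lambda>z. det (mat n n (\<lambda>(i,j). a i j z))) holomorphic_on S"
proof -
  have "\<exists>f'. ((\<lambda>z. det (mat n n (\<lambda>(i,j). a i j z))) has_field_derivative f') (at z)" if z: "z \<in> S" for z
    by (rule exI, rule det_mat_deriv[where a'="\<lambda>i j. deriv (a i j) z"])
       (use assms z in \<open>auto intro: holomorphic_derivI\<close>)
  then show ?thesis using assms(2) by (simp add: holomorphic_on_open)
qed

lemma Qcoeff_formula:
  "Qcoeff gs k z = (-1)^(k + length gs) *
     det (mat (length gs) (length gs) (\<lambda>(i,j). (deriv^^(if i < k then i else Suc i)) (gs!j) z))"
  unfolding Qcoeff_def cofactor_def
  by (intro arg_cong2[where f="(*)"] refl arg_cong[where f=det] eq_matI)
     (auto simp: mat_delete_def Wr_mat_def nth_append)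

lemma Qcoeff_holo:
  assumes "\<forall>g\<in>set gs. g holomorphic_on S" "open S"
  shows "Qcoeff gs k holomorphic_on S"
  unfolding Qcoeff_formula
  by (intro holomorphic_on_mult holomorphic_on_const det_mat_holo holomorphic_higher_deriv)
     (use assms in auto)

lemma Qcoeff_top: "Qcoeff gs (length gs) z = Wr gs z"
  unfolding Qcoeff_formula Wr_def Wr_mat_def
  by (simp add: mult_2[symmetric], intro arg_cong[where f=det] eq_matI) auto

lemma Qop_expand:
  "Qop gs u z = (\<Sum>k<Suc (length gs). (deriv^^k) u z * Qcoeff gs k z)"
proof -
  let ?A = "Wr_mat (gs @ [u]) z"
  have A: "?A \<in> carrier_mat (Suc (length gs)) (Suc (length gs))" by (simp add: Wr_mat_def)
  have "Qop gs u z = (\<Sum>k<Suc (length gs). ?A $$ (k, length gs) * cofactor ?A k (length gs))"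
    unfolding Qop_def Wr_def by (rule laplace_expansion_column[OF A]) simp
  also have "\<dots> = (\<Sum>k<Suc (length gs). (deriv^^k) u z * Qcoeff gs k z)"
    unfolding Qcoeff_def cofactor_def
    by (intro sum.cong refl arg_cong2[where f="(*)"] arg_cong[where f=det] eq_matI)
       (auto simp: mat_delete_def Wr_mat_def nth_append)
  finally show ?thesis .
qed

lemma Qop_self_zero:
  assumes "g \<in> set gs"
  shows "Qop gs g = (\<lambda>z. 0)"
proof
  fix z
  obtain i where i: "i < length gs" "gs ! i = g" using assms by (auto simp: in_set_conv_nth)
  show "Qop gs g z = 0"
    unfolding Qop_def Wr_def
  proof (rule det_identical_columns[of _ "Suc (length gs)" i "length gs"])
    show "col (Wr_mat (gs @ [g]) z) i = col (Wr_mat (gs @ [g]) z) (length gs)"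
      using i by (intro eq_vecI) (auto simp: Wr_mat_def nth_append)
  qed (use i in \<open>auto simp: Wr_mat_def\<close>)
qed

lemma pow_higher_deriv:
  "(deriv^^j) (\<lambda>z. (z - c)^n) = (\<lambda>z. of_nat (\<Prod>i<j. n - i) * (z - c)^(n - j) :: complex)"
proof (induction j)
  case (Suc j)
  show ?case
  proof
    fix z
    have "((\<lambda>z. of_nat (\<Prod>i<j. n - i) * (z - c)^(n - j) :: complex) has_field_derivative
        of_nat (\<Prod>i<Suc j. n - i) * (z - c)^(n - Suc j)) (at z)"
      by (rule derivative_eq_intros refl)+ (simp add: diff_Suc split: nat.split)
    then show "(deriv ^^ Suc j) (\<lambda>z. (z - c) ^ n) z = of_nat (\<Prod>i<Suc j. n - i) * (z - c)^(n - Suc j)"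
      using Suc by (simp add: DERIV_imp_deriv)
  qed
qed simp

lemma pow_higher_deriv_at:
  "(deriv^^j) (\<lambda>z. (z - c)^n) c = (if j = n then fact n else (0::complex))"
proof -
  have P0: "j > n \<Longrightarrow> (\<Prod>i<j. n - i) = 0" by (rule prod_zero) auto
  have F: "(\<Prod>i<n. n - i) = fact n"
    using fact_prod_rev[of n, where 'a=nat] by (simp add: atLeast0LessThan)
  show ?thesis
  proof (cases "j = n")
    case True
    have "(deriv^^j) (\<lambda>z. (z - c)^n) c = of_nat (\<Prod>i<n. n - i)"
      unfolding pow_higher_deriv True by simp
    also have "\<dots> = fact n" unfolding F by (rule of_nat_fact)
    finally show ?thesis using True by simp
  next
    case False
    then show ?thesis unfolding pow_higher_deriv using P0 by (cases "j > n") auto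
  qed
qed

theorem mainTheorem10:
  fixes gs :: "(complex \<Rightarrow> complex) list" and lam :: complex
  assumes analytic: "\<forall>g \<in> set gs. g analytic_on {lam}"
    and w0: "Wr gs lam = 0"
    and w1: "deriv (Wr gs) lam \<noteq> 0"
  shows "(\<exists>!\<gamma>. \<forall>u. u analytic_on {lam} \<longrightarrow> delta_shift lam \<gamma> (Qop gs u) = 0)
       \<and> (\<forall>u. u analytic_on {lam} \<longrightarrow>
            delta_shift lam ((Qv gs lam - (deriv ^^ 2) (Wr gs) lam) / deriv (Wr gs) lam) (Qop gs u) = 0)"
proof -
  define m where "m = length gs"
  have m0: "m > 0"
  proof (rule ccontr)
    assume "\<not> m > 0"
    then have "gs = []" by (simp add: m_def)
    moreover have "mat 0 0 f = (1\<^sub>m 0 :: complex mat)" for f by (intro eq_matI) auto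
    ultimately have "Wr gs lam = 1" by (simp add: Wr_def Wr_mat_def)
    with w0 show False by simp
  qed
  have ne: "gs \<noteq> []" using m0 by (auto simp: m_def)
  have "\<forall>g\<in>set gs. \<exists>s. open s \<and> lam \<in> s \<and> g holomorphic_on s"
    using analytic by (simp add: analytic_at)
  then obtain F where F: "\<forall>g\<in>set gs. open (F g) \<and> lam \<in> F g \<and> g holomorphic_on F g"
    by metis
  define S where "S = (\<Inter>g\<in>set gs. F g)"
  have S: "open S" "lam \<in> S" using F by (auto simp: S_def intro!: open_INT)
  have holS: "\<forall>g\<in>set gs. g holomorphic_on S"
    using F by (auto simp: S_def intro: holomorphic_on_subset)
  define C where "C k = Qcoeff gs k" for k
  have holC: "C k holomorphic_on S" for k unfolding C_def by (rule Qcoeff_holo[OF holS S(1)])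
  have dC: "(C k has_field_derivative deriv (C k) lam) (at lam)" for k
    by (rule holomorphic_derivI[OF holC S])
  define A where "A \<gamma> j = (if 0 < j then C (j-1) lam else 0) + (if j \<le> m then deriv (C j) lam + \<gamma> * C j lam else 0)" for \<gamma> j
  have L: "delta_shift lam \<gamma> (Qop gs u) = (\<Sum>j<Suc (Suc m). (deriv^^j) u lam * A \<gamma> j)"
    if u: "u analytic_on {lam}" for u \<gamma>
  proof -
    obtain U where U: "open U" "lam \<in> U" "u holomorphic_on U" using u by (auto simp: analytic_at)
    have du: "((deriv^^k) u has_field_derivative (deriv^^Suc k) u lam) (at lam)" for k
    proof -
      have "(deriv^^k) u holomorphic_on U" using U by (intro holomorphic_higher_deriv) auto
      from holomorphic_derivI[OF this U(1,2)] show ?thesis by simp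
    qed
    have eq: "Qop gs u = (\<lambda>z. \<Sum>k<Suc m. (deriv^^k) u z * C k z)"
      by (rule ext) (simp add: Qop_expand C_def m_def)
    have "(Qop gs u has_field_derivative
        (\<Sum>k<Suc m. (deriv^^Suc k) u lam * C k lam + (deriv^^k) u lam * deriv (C k) lam)) (at lam)"
      unfolding eq
    proof (rule DERIV_sum)
      fix k
      show "((\<lambda>z. (deriv^^k) u z * C k z) has_field_derivative
        ((deriv^^Suc k) u lam * C k lam + (deriv^^k) u lam * deriv (C k) lam)) (at lam)"
        using DERIV_mult[OF du dC, of k k] by (simp add: algebra_simps)
    qed
    then have dQ: "deriv (Qop gs u) lam = 
        (\<Sum>k<Suc m. (deriv^^Suc k) u lam * C k lam + (deriv^^k) u lam * deriv (C k) lam)"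
      by (rule DERIV_imp_deriv)
    have eql: "Qop gs u lam = (\<Sum>k<Suc m. (deriv^^k) u lam * C k lam)" by (simp add: eq)
    have s1: "(\<Sum>j<Suc (Suc m). (deriv^^j) u lam * (if 0 < j then C (j-1) lam else 0))
        = (\<Sum>k<Suc m. (deriv^^Suc k) u lam * C k lam)"
      by (subst sum.lessThan_Suc_shift) simp
    have s2: "(\<Sum>j<Suc (Suc m). (deriv^^j) u lam * (if j \<le> m then deriv (C j) lam + \<gamma> * C j lam else 0))
        = (\<Sum>k<Suc m. (deriv^^k) u lam * (deriv (C k) lam + \<gamma> * C k lam))"
      by (subst sum.lessThan_Suc) (auto intro!: sum.cong)
    have "(\<Sum>j<Suc (Suc m). (deriv^^j) u lam * A \<gamma> j) =
       (\<Sum>j<Suc (Suc m). (deriv^^j) u lam * (if 0 < j then C (j-1) lam else 0))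
       + (\<Sum>j<Suc (Suc m). (deriv^^j) u lam * (if j \<le> m then deriv (C j) lam + \<gamma> * C j lam else 0))"
      unfolding A_def by (simp add: distrib_left sum.distrib)
    also have "\<dots> = deriv (Qop gs u) lam + \<gamma> * Qop gs u lam"
      unfolding s1 s2 dQ eql by (simp add: sum.distrib sum_distrib_left algebra_simps)
    finally show ?thesis by (simp add: delta_shift_def)
  qed
  have Ctop: "C m = Wr gs" unfolding C_def m_def by (rule ext, rule Qcoeff_top)
  have WrD: "(Wr gs has_field_derivative
     det (mat m m (\<lambda>(i,j). (deriv^^(if i = m - 1 then m else i)) (gs!j) z))) (at z)" if "z \<in> S" for z
    unfolding m_def by (rule Wr_has_deriv[OF holS S(1) that ne])
  have Cm1: "C (m-1) z = - deriv (Wr gs) z" if z: "z \<in> S" for z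
  proof -
    have "odd (m - 1 + m)" using m0 by simp
    then have "C (m-1) z = - det (mat m m (\<lambda>(i,j). (deriv^^(if i = m - 1 then m else i)) (gs!j) z))"
      unfolding C_def Qcoeff_formula m_def[symmetric]
      by (simp, intro arg_cong[where f=det] eq_matI) auto
    with DERIV_imp_deriv[OF WrD[OF z]] show ?thesis by simp
  qed
  have holW: "Wr gs holomorphic_on S" using WrD S(1) by (auto simp: holomorphic_on_open)
  have holW': "deriv (Wr gs) holomorphic_on S" by (rule holomorphic_deriv[OF holW S(1)])
  have dCm1: "deriv (C (m-1)) lam = - (deriv^^2) (Wr gs) lam"
  proof -
    have "eventually (\<lambda>z. C (m-1) z = - deriv (Wr gs) z) (nhds lam)"
      using eventually_nhds_in_open[OF S] by eventually_elim (rule Cm1)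
    then have "deriv (C (m-1)) lam = deriv (\<lambda>z. - deriv (Wr gs) z) lam"
      by (rule deriv_cong_ev) simp
    also have "\<dots> = - deriv (deriv (Wr gs)) lam"
      by (rule DERIV_imp_deriv, rule DERIV_minus, rule holomorphic_derivI[OF holW' S])
    finally show ?thesis by (simp add: numeral_2_eq_2)
  qed
  have A1: "A \<gamma> (Suc m) = 0" for \<gamma> using w0 by (simp add: A_def Ctop)
  have A2: "A \<gamma> m = 0" for \<gamma> using m0 w0 Cm1[OF S(2)] by (simp add: A_def Ctop)
  have A3: "A \<gamma> (m-1) = Qv gs lam - (deriv^^2) (Wr gs) lam - \<gamma> * deriv (Wr gs) lam" for \<gamma>
  proof -
    have "(if 0 < m - 1 then C (m-1-1) lam else 0) = Qv gs lam"
      by (auto simp: Qv_def C_def m_def diff_Suc split: nat.split)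
    then show ?thesis using m0 Cm1[OF S(2)] dCm1 unfolding A_def by (simp only: if_True if_False) simp
  qed
  define \<gamma>0 where "\<gamma>0 = (Qv gs lam - (deriv ^^ 2) (Wr gs) lam) / deriv (Wr gs) lam"
  have A30: "A \<gamma>0 (m-1) = 0" unfolding A3 \<gamma>0_def using w1 by (simp add: field_simps)
  have Lred: "(\<Sum>j<Suc (Suc m). f j * A \<gamma>0 j) = (\<Sum>j<m-1. f j * A \<gamma>0 j)" for f :: "nat \<Rightarrow> complex"
  proof (rule sum.mono_neutral_right)
    show "\<forall>i\<in>{..<Suc (Suc m)} - {..<m - 1}. f i * A \<gamma>0 i = 0"
    proof
      fix i assume "i \<in> {..<Suc (Suc m)} - {..<m - 1}"
      then have "i = m - 1 \<or> i = m \<or> i = Suc m" using m0 by auto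
      then show "f i * A \<gamma>0 i = 0" using A1 A2 A30 by auto
    qed
  qed auto
  have orth: "(\<Sum>j<m-1. (deriv^^j) (gs!i) lam * A \<gamma>0 j) = 0" if i: "i < m" for i
  proof -
    have gi: "gs!i \<in> set gs" using i by (simp add: m_def)
    have "delta_shift lam \<gamma>0 (Qop gs (gs!i)) = 0"
      unfolding Qop_self_zero[OF gi] delta_shift_def by simp
    moreover have "delta_shift lam \<gamma>0 (Qop gs (gs!i)) = (\<Sum>j<Suc (Suc m). (deriv^^j) (gs!i) lam * A \<gamma>0 j)"
      using analytic gi by (intro L) auto
    ultimately show ?thesis unfolding Lred by simp
  qed
  define B where "B = mat m m (\<lambda>(i,j). (deriv^^(if i = m - 1 then m else i)) (gs!j) lam)"
  have detB: "det (transpose_mat B) \<noteq> 0"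
    using DERIV_imp_deriv[OF WrD[OF S(2)]] w1 det_transpose[of B m]
    by (simp add: B_def)
  define x where "x = vec m (\<lambda>j. if j < m - 1 then A \<gamma>0 j else 0)"
  have "transpose_mat B *\<^sub>v x = 0\<^sub>v m"
  proof (rule eq_vecI)
    fix i assume "i < dim_vec (0\<^sub>v m :: complex vec)"
    then have i: "i < m" by simp
    have "(transpose_mat B *\<^sub>v x) $ i = (\<Sum>j\<in>{0..<m}. if j < m - 1 then (deriv^^j) (gs!i) lam * A \<gamma>0 j else 0)"
      using i by (simp add: B_def x_def scalar_prod_def, intro sum.cong) auto
    also have "\<dots> = (\<Sum>j<m-1. (deriv^^j) (gs!i) lam * A \<gamma>0 j)"
      by (subst sum.inter_filter[symmetric]) (auto intro!: sum.cong)
    finally show "(transpose_mat B *\<^sub>v x) $ i = 0\<^sub>v m $ i" using orth[OF i] i by simp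
  qed (simp add: B_def x_def)
  moreover have "x \<in> carrier_vec m" by (simp add: x_def)
  moreover have "transpose_mat B \<in> carrier_mat m m" by (simp add: B_def)
  ultimately have "x = 0\<^sub>v m"
    using detB det_0_iff_vec_prod_zero[of "transpose_mat B" m] by blast
  have Az: "A \<gamma>0 j = 0" if "j < m - 1" for j
  proof -
    have "vec_index x j = 0" using \<open>x = 0\<^sub>v m\<close> that by simp
    then show ?thesis using that by (simp add: x_def)
  qed
  have exist: "\<forall>u. u analytic_on {lam} \<longrightarrow> delta_shift lam \<gamma>0 (Qop gs u) = 0"
  proof (intro allI impI)
    fix u :: "complex \<Rightarrow> complex" assume "u analytic_on {lam}"
    then have "delta_shift lam \<gamma>0 (Qop gs u) = (\<Sum>j<m-1. (deriv^^j) u lam * A \<gamma>0 j)"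
      unfolding Lred[symmetric] by (rule L)
    also have "\<dots> = 0" using Az by simp
    finally show "delta_shift lam \<gamma>0 (Qop gs u) = 0" .
  qed
  have uniq: "\<gamma> = \<gamma>0" if h: "\<forall>u. u analytic_on {lam} \<longrightarrow> delta_shift lam \<gamma> (Qop gs u) = 0" for \<gamma>
  proof -
    define p where "p = (\<lambda>z::complex. (z - lam)^(m-1))"
    have pa: "p analytic_on {lam}" unfolding p_def by (intro analytic_intros)
    have "0 = (\<Sum>j<Suc (Suc m). (deriv^^j) p lam * A \<gamma> j)" using h pa L by simp
    also have "\<dots> = (\<Sum>j<Suc (Suc m). if j = m - 1 then fact (m-1) * A \<gamma> j else 0)"
      unfolding p_def pow_higher_deriv_at by (intro sum.cong) auto
    also have "\<dots> = fact (m-1) * A \<gamma> (m-1)" by (subst sum.delta) auto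
    finally have "A \<gamma> (m-1) = 0" by simp
    then show ?thesis unfolding A3 \<gamma>0_def using w1 by (simp add: field_simps)
  qed
  show ?thesis using exist uniq unfolding \<gamma>0_def by blast
qed

end
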